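(* Let $G$ be a finite $2$-connected outerplanar graph and $C$ its Hamilton cycle. Let $D$ be a fixed closed disk in $\mathbb{R}^2$ and let $\sigma: G\to D$ be an embedding of $G$ into $D$ such that $C$ is mapped onto the boundary $\partial D$. Then there is an embedding $\sigma^*: G\to D$ such that (i) $\sigma^*(e)$ is a straight line segment for every $e\in E(G)\setminus E(C)$, and (ii) $\sigma^*(e)=\sigma(e)$ whenever $e\in E(C)$ or $\sigma(e)$ is a straight line segment.
   Context: A finite graph is outerplanar if it can be embedded in the plane with all vertices on the boundary of a common face; a finite $2$-connected outerplanar graph has a unique Hamilton cycle. An embedding of a graph (as a 1-complex) into $D$ is a topological embedding, i.e. vertices go to distinct points and edges to arcs between the images of their endvertices, meeting only at common endpoints. *)

theory Defs
  imports "HOL-Analysis.Analysis"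
begin

text \<open>Finite simple graphs: vertex set V, edge set E of 2-element subsets of V.
  The plane R^2 is represented by the type complex.\<close>

definition simple_graph :: "'v set \<Rightarrow> 'v set set \<Rightarrow> bool" where
  "simple_graph V E \<longleftrightarrow> finite V \<and> (\<forall>e\<in>E. e \<subseteq> V \<and> card e = 2)"

definition graph_connected :: "'v set \<Rightarrow> 'v set set \<Rightarrow> bool" where
  "graph_connected V E \<longleftrightarrow> V \<noteq> {} \<and>
     (\<forall>u\<in>V. \<forall>w\<in>V. (u, w) \<in> ({(x, y). {x, y} \<in> E \<and> x \<in> V \<and> y \<in> V})\<^sup>*)"

definition two_connected :: "'v set \<Rightarrow> 'v set set \<Rightarrow> bool" where
  "two_connected V E \<longleftrightarrow> card V \<ge> 3 \<and> graph_connected V E \<and>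
     (\<forall>x\<in>V. graph_connected (V - {x}) {e\<in>E. x \<notin> e})"

definition hamilton_cycle :: "'v set \<Rightarrow> 'v set set \<Rightarrow> 'v set set \<Rightarrow> bool" where
  "hamilton_cycle V E C \<longleftrightarrow> C \<subseteq> E \<and>
     (\<exists>vs. distinct vs \<and> set vs = V \<and> length vs \<ge> 3 \<and>
        C = {{vs ! i, vs ! ((i + 1) mod length vs)} | i. i < length vs})"

definition graph_embedding ::
  "complex set \<Rightarrow> 'v set \<Rightarrow> 'v set set \<Rightarrow> ('v \<Rightarrow> complex) \<Rightarrow> ('v set \<Rightarrow> complex set) \<Rightarrow> bool" where
  "graph_embedding S V E p A \<longleftrightarrow>
     inj_on p V \<and> p ` V \<subseteq> S \<and>
     (\<forall>e\<in>E. A e \<subseteq> S \<and>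
        (\<exists>u w g. e = {u, w} \<and> arc g \<and> path_image g = A e \<and>
                 pathstart g = p u \<and> pathfinish g = p w)) \<and>
     (\<forall>e\<in>E. \<forall>f\<in>E. e \<noteq> f \<longrightarrow> A e \<inter> A f = p ` (e \<inter> f)) \<and>
     (\<forall>e\<in>E. \<forall>v\<in>V. p v \<in> A e \<longrightarrow> v \<in> e)"

definition embedding_image :: "'v set \<Rightarrow> 'v set set \<Rightarrow> ('v \<Rightarrow> complex) \<Rightarrow> ('v set \<Rightarrow> complex set) \<Rightarrow> complex set" where
  "embedding_image V E p A = p ` V \<union> \<Union>(A ` E)"

definition outerplanar :: "'v set \<Rightarrow> 'v set set \<Rightarrow> bool" where
  "outerplanar V E \<longleftrightarrow> (\<exists>p A. graph_embedding UNIV V E p A \<and>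
     (\<exists>F \<in> components (- embedding_image V E p A). p ` V \<subseteq> frontier F))"

definition straight_segment :: "complex set \<Rightarrow> bool" where
  "straight_segment X \<longleftrightarrow> (\<exists>a b. a \<noteq> b \<and> X = closed_segment a b)"

end

theory Submission
  imports Defs
begin

lemma open_seg_ball:
  fixes z0 y a b :: complex
  assumes "y \<in> open_segment a b" "a \<in> cball z0 r" "b \<in> cball z0 r"
  shows "y \<in> ball z0 r"
  using dist_decreases_open_segment[OF assms(1), of z0] assms(2,3) by auto

lemma closed_seg_sphere:
  fixes z0 y a b :: complex
  assumes "y \<in> closed_segment a b" "a \<in> cball z0 r" "b \<in> cball z0 r" "y \<in> sphere z0 r"
  shows "y = a \<or> y = b"
proof -
  have "y \<notin> open_segment a b" using open_seg_ball[of y a b z0 r] assms by auto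
  then show ?thesis using assms(1) closed_segment_eq_open by auto
qed

lemma mid_ball:
  fixes x v z0 :: complex
  assumes "v \<noteq> 0" "l < m" "m < n" "x + l *\<^sub>R v \<in> cball z0 r" "x + n *\<^sub>R v \<in> cball z0 r"
  shows "x + m *\<^sub>R v \<in> ball z0 r"
proof -
  define u where "u = (m - l) / (n - l)"
  have u: "0 < u" "u < 1" using assms(2,3) by (auto simp: u_def field_simps)
  have e1: "(1-u) *\<^sub>R (x + l *\<^sub>R v) + u *\<^sub>R (x + n *\<^sub>R v) = x + ((1-u)*l + u*n) *\<^sub>R v"
    by (simp add: algebra_simps)
  have e3: "u*(n-l) = m-l" using assms(2,3) by (simp add: u_def)
  have e2: "(1-u)*l + u*n = m" using e3 by (simp add: algebra_simps)
  have ne: "x + l *\<^sub>R v \<noteq> x + n *\<^sub>R v" using assms(1,2,3) by auto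
  have "x + m *\<^sub>R v \<in> open_segment (x + l *\<^sub>R v) (x + n *\<^sub>R v)"
    unfolding in_segment using u e1 e2 ne by metis
  then show ?thesis using open_seg_ball assms(4,5) by blast
qed

lemma seg_share:
  fixes z0 a b d :: complex
  assumes "a \<in> sphere z0 r" "b \<in> sphere z0 r" "d \<in> sphere z0 r" "a \<noteq> b" "a \<noteq> d" "b \<noteq> d"
  shows "closed_segment a b \<inter> closed_segment a d = {a}"
proof (rule ccontr)
  assume "\<not> ?thesis"
  then obtain y where y: "y \<in> closed_segment a b" "y \<in> closed_segment a d" "y \<noteq> a" by auto
  from y(1) obtain s where s: "0 \<le> s" "s \<le> 1" "y = a + s *\<^sub>R (b - a)"
    unfolding in_segment by (auto simp: algebra_simps)
  from y(2) obtain t where t: "0 \<le> t" "t \<le> 1" "y = a + t *\<^sub>R (d - a)"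
    unfolding in_segment by (auto simp: algebra_simps)
  have s0: "s > 0" using s y(3) by (cases "s = 0") auto
  have t0: "t > 0" using t y(3) by (cases "t = 0") auto
  have eqst: "s *\<^sub>R (b - a) = t *\<^sub>R (d - a)"
  proof -
    have "a + s *\<^sub>R (b - a) = a + t *\<^sub>R (d - a)" using s(3) t(3) by simp
    then show ?thesis by simp
  qed
  have "s \<noteq> t"
  proof
    assume "s = t" then have "s *\<^sub>R (b - a) = s *\<^sub>R (d - a)" using eqst by simp
    then have "b - a = d - a" using s0 by simp
    then show False using assms by auto
  qed
  have bd1: "b = a + (t/s) *\<^sub>R (d - a)"
  proof -
    have "b - a = (1/s) *\<^sub>R (s *\<^sub>R (b - a))" using s0 by simp
    also have "\<dots> = (1/s) *\<^sub>R (t *\<^sub>R (d - a))" using eqst by simp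
    also have "\<dots> = (t/s) *\<^sub>R (d - a)" by simp
    finally show ?thesis by (metis add.commute diff_add_cancel)
  qed
  have bd2: "d = a + (s/t) *\<^sub>R (b - a)"
  proof -
    have "d - a = (1/t) *\<^sub>R (t *\<^sub>R (d - a))" using t0 by simp
    also have "\<dots> = (1/t) *\<^sub>R (s *\<^sub>R (b - a))" using eqst by simp
    also have "\<dots> = (s/t) *\<^sub>R (b - a)" by simp
    finally show ?thesis by (metis add.commute diff_add_cancel)
  qed
  have cb: "\<And>q. q \<in> sphere z0 r \<Longrightarrow> q \<in> cball z0 r" by auto
  have ab: "a + 0 *\<^sub>R (b - a) \<in> cball z0 r" "a + 1 *\<^sub>R (b - a) \<in> cball z0 r"
    "a + 0 *\<^sub>R (d - a) \<in> cball z0 r" "a + 1 *\<^sub>R (d - a) \<in> cball z0 r"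
    using assms by auto
  show False
  proof (cases "s < t")
    case True
    then have "s/t < 1" "0 < s/t" using s0 t0 by auto
    then have "a + (s/t) *\<^sub>R (b - a) \<in> ball z0 r"
      using mid_ball[of "b - a" 0 "s/t" 1 a z0 r] ab assms(4) by auto
    then show False using bd2 assms(3) by simp
  next
    case False
    then have "t < s" using \<open>s \<noteq> t\<close> by simp
    then have "t/s < 1" "0 < t/s" using s0 t0 by auto
    then have "a + (t/s) *\<^sub>R (d - a) \<in> ball z0 r"
      using mid_ball[of "d - a" 0 "t/s" 1 a z0 r] ab assms(5) by auto
    then show False using bd1 assms(2) by simp
  qed
qed

lemma rec_real:
  fixes v1 v2 w1 w2 z1 z2 :: real
  assumes D: "v1 * w2 - v2 * w1 \<noteq> 0"
  shows "(z1*w2 - z2*w1)/(v1 * w2 - v2 * w1)* v1 + (v1*z2 - v2*z1)/(v1 * w2 - v2 * w1)*w1 = z1"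
    "(z1*w2 - z2*w1)/(v1 * w2 - v2 * w1)* v2 + (v1*z2 - v2*z1)/(v1 * w2 - v2 * w1)*w2 = z2"
proof -
  have "(z1*w2 - z2*w1)/(v1 * w2 - v2 * w1)* v1 + (v1*z2 - v2*z1)/(v1 * w2 - v2 * w1)*w1
     = ((z1*w2 - z2*w1)* v1 + (v1*z2 - v2*z1)*w1) / (v1 * w2 - v2 * w1)"
    by (simp add: add_divide_distrib)
  also have "(z1*w2 - z2*w1)* v1 + (v1*z2 - v2*z1)*w1 = z1 * (v1 * w2 - v2 * w1)" by algebra
  finally show "(z1*w2 - z2*w1)/(v1 * w2 - v2 * w1)* v1 + (v1*z2 - v2*z1)/(v1 * w2 - v2 * w1)*w1 = z1"
    using D by simp
  have "(z1*w2 - z2*w1)/(v1 * w2 - v2 * w1)* v2 + (v1*z2 - v2*z1)/(v1 * w2 - v2 * w1)*w2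
     = ((z1*w2 - z2*w1)* v2 + (v1*z2 - v2*z1)*w2) / (v1 * w2 - v2 * w1)"
    by (simp add: add_divide_distrib)
  also have "(z1*w2 - z2*w1)* v2 + (v1*z2 - v2*z1)*w2 = z2 * (v1 * w2 - v2 * w1)" by algebra
  finally show "(z1*w2 - z2*w1)/(v1 * w2 - v2 * w1)* v2 + (v1*z2 - v2*z1)/(v1 * w2 - v2 * w1)*w2 = z2"
    using D by simp
qed

lemma col3_aux:
  fixes x v z0 :: complex
  assumes "v \<noteq> 0" "l < m" "m < n" "x + l *\<^sub>R v \<in> sphere z0 r" "x + m *\<^sub>R v \<in> sphere z0 r"
    "x + n *\<^sub>R v \<in> sphere z0 r"
  shows False
  using mid_ball[OF assms(1-3), of x z0 r] assms(4-6) by auto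

lemma col3:
  fixes x v z0 :: complex
  assumes "v \<noteq> 0" "l \<noteq> m" "m \<noteq> n" "l \<noteq> n" "x + l *\<^sub>R v \<in> sphere z0 r" "x + m *\<^sub>R v \<in> sphere z0 r"
    "x + n *\<^sub>R v \<in> sphere z0 r"
  shows False
proof -
  consider "l < m" "m < n" | "l < n" "n < m" | "m < l" "l < n" | "m < n" "n < l" | "n < l" "l < m" | "n < m" "m < l"
    using assms(2-4) by linarith
  then show False
    by cases (use col3_aux[OF assms(1)] assms(5-7) in blast)+
qed

lemma seg_coords:
  fixes P Q y :: complex
  assumes "y \<in> closed_segment P Q"
    and "\<And>P Q u. f ((1-u) *\<^sub>R P + u *\<^sub>R Q) = (1-u) * f P + u * f Q"
  shows "min (f P) (f Q) \<le> f y \<and> f y \<le> max (f P) (f Q)"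
proof -
  obtain u where u: "0 \<le> u" "u \<le> 1" "y = (1-u) *\<^sub>R P + u *\<^sub>R Q" using assms(1) unfolding in_segment by auto
  have fy: "f y = (1-u) * f P + u * f Q" using u assms(2) by simp
  have "(1-u) * min (f P) (f Q) \<le> (1-u) * f P" using u by (intro mult_left_mono) auto
  moreover have "u * min (f P) (f Q) \<le> u * f Q" using u by (intro mult_left_mono) auto
  moreover have "(1-u) * f P \<le> (1-u) * max (f P) (f Q)" using u by (intro mult_left_mono) auto
  moreover have "u * f Q \<le> u * max (f P) (f Q)" using u by (intro mult_left_mono) auto
  ultimately show ?thesis unfolding fy by (simp add: algebra_simps)
qed


lemma crossing:
  fixes a b c d x z0 :: complex and g h :: "real \<Rightarrow> complex"
  assumes sph: "a \<in> sphere z0 r" "b \<in> sphere z0 r" "c \<in> sphere z0 r" "d \<in> sphere z0 r"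
    and dst: "a \<noteq> b" "a \<noteq> c" "a \<noteq> d" "b \<noteq> c" "b \<noteq> d" "c \<noteq> d"
    and x: "x \<in> closed_segment a b" "x \<in> closed_segment c d"
    and g: "path g" "path_image g \<subseteq> cball z0 r" "pathstart g = a" "pathfinish g = b"
    and h: "path h" "path_image h \<subseteq> cball z0 r" "pathstart h = c" "pathfinish h = d"
  shows "path_image g \<inter> path_image h \<noteq> {}"
proof
  assume disj: "path_image g \<inter> path_image h = {}"
  have cb: "a \<in> cball z0 r" "b \<in> cball z0 r" "c \<in> cball z0 r" "d \<in> cball z0 r"
    using sph by auto
  obtain s where s: "0 \<le> s" "s \<le> 1" "x = (1-s) *\<^sub>R a + s *\<^sub>R b"
    using x(1) unfolding in_segment by auto
  obtain t where t: "0 \<le> t" "t \<le> 1" "x = (1-t) *\<^sub>R c + t *\<^sub>R d"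
    using x(2) unfolding in_segment by auto
  define v where "v = b - a"
  define w where "w = d - c"
  have v0: "v \<noteq> 0" and w0: "w \<noteq> 0" using dst by (auto simp: v_def w_def)
  have av: "a = x + (-s) *\<^sub>R v" "b = x + (1-s) *\<^sub>R v"
    by (simp_all add: s v_def algebra_simps)
  have cw: "c = x + (-t) *\<^sub>R w" "d = x + (1-t) *\<^sub>R w"
    by (simp_all add: t w_def algebra_simps)
  have "s \<noteq> 0"
  proof
    assume "s = 0" then have "x = a" using s by simp
    then show False using closed_seg_sphere[of a c d z0 r] x(2) cb sph dst by auto
  qed
  moreover have "s \<noteq> 1"
  proof
    assume "s = 1" then have "x = b" using s by simp
    then show False using closed_seg_sphere[of b c d z0 r] x(2) cb sph dst by auto
  qed
  ultimately have s01: "0 < s" "s < 1" using s by auto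
  have "t \<noteq> 0"
  proof
    assume "t = 0" then have "x = c" using t by simp
    then show False using closed_seg_sphere[of c a b z0 r] x(1) cb sph dst by auto
  qed
  moreover have "t \<noteq> 1"
  proof
    assume "t = 1" then have "x = d" using t by simp
    then show False using closed_seg_sphere[of d a b z0 r] x(1) cb sph dst by auto
  qed
  ultimately have t01: "0 < t" "t < 1" using t by auto
  define D where "D = Re v * Im w - Im v * Re w"
  have D0: "D \<noteq> 0"
  proof
    assume D: "D = 0"
    have vv: "Re v \<noteq> 0 \<or> Im v \<noteq> 0" using v0 by (simp add: complex_eq_iff)
    define k where "k = (Re v * Re w + Im v * Im w)/(Re v^2 + Im v^2)"
    have p: "Re v^2 + Im v^2 \<noteq> 0" using vv by (simp add: sum_power2_eq_zero_iff)
    have "Im v * (Re v * Im w) = Im v * (Im v * Re w)" "Re v * (Re v * Im w) = Re v * (Im v * Re w)"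
      using D by (simp_all add: D_def)
    then have wk: "w = k *\<^sub>R v" using p unfolding k_def
      by (simp add: complex_eq_iff field_simps power2_eq_square) algebra
    have c2: "c = x + (-t*k) *\<^sub>R v" using cw(1) wk by simp
    have k0: "k \<noteq> 0" using wk w0 by auto
    have "-s \<noteq> 1 - s" by simp
    moreover have "1 - s \<noteq> -t*k" using c2 av dst by auto
    moreover have "-s \<noteq> -t*k" using c2 av dst by auto
    ultimately show False using col3[OF v0, of "-s" "1-s" "-t*k" x z0 r] sph av c2 by auto
  qed
  define \<alpha> where "\<alpha> z = (Re (z - x) * Im w - Im (z - x) * Re w) / D" for z
  define \<beta> where "\<beta> z = (Re v * Im (z - x) - Im v * Re (z - x)) / D" for z
  have rec: "z = x + \<alpha> z *\<^sub>R v + \<beta> z *\<^sub>R w" for z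
    using rec_real[of "Re v" "Im w" "Im v" "Re w" "Re (z - x)" "Im (z - x)"] D0
    by (simp add: \<alpha>_def \<beta>_def D_def complex_eq_iff algebra_simps)
  have av1: "\<alpha> (x + l *\<^sub>R v) = l" "\<beta> (x + l *\<^sub>R v) = 0" for l
  proof -
    have "Re ((x + l *\<^sub>R v) - x) * Im w - Im ((x + l *\<^sub>R v) - x) * Re w = l * D"
      by (simp add: D_def algebra_simps)
    then show "\<alpha> (x + l *\<^sub>R v) = l" using D0 by (simp add: \<alpha>_def)
    have "Re v * Im ((x + l *\<^sub>R v) - x) - Im v * Re ((x + l *\<^sub>R v) - x) = 0"
      by (simp add: algebra_simps)
    then show "\<beta> (x + l *\<^sub>R v) = 0" by (simp add: \<beta>_def)
  qed
  have aw1: "\<alpha> (x + l *\<^sub>R w) = 0" "\<beta> (x + l *\<^sub>R w) = l" for l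
  proof -
    have "Re v * Im ((x + l *\<^sub>R w) - x) - Im v * Re ((x + l *\<^sub>R w) - x) = l * D"
      by (simp add: D_def algebra_simps)
    then show "\<beta> (x + l *\<^sub>R w) = l" using D0 by (simp add: \<beta>_def)
    have "Re ((x + l *\<^sub>R w) - x) * Im w - Im ((x + l *\<^sub>R w) - x) * Re w = 0"
      by (simp add: algebra_simps)
    then show "\<alpha> (x + l *\<^sub>R w) = 0" by (simp add: \<alpha>_def)
  qed
  have aff: "\<alpha> ((1-u) *\<^sub>R P + u *\<^sub>R Q) = (1-u) * \<alpha> P + u * \<alpha> Q"
     "\<beta> ((1-u) *\<^sub>R P + u *\<^sub>R Q) = (1-u) * \<beta> P + u * \<beta> Q" for u P Q
  proof -
    have "Re (((1-u) *\<^sub>R P + u *\<^sub>R Q) - x) * Im w - Im (((1-u) *\<^sub>R P + u *\<^sub>R Q) - x) * Re w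
      = (1-u) * (Re (P - x) * Im w - Im (P - x) * Re w) + u * (Re (Q - x) * Im w - Im (Q - x) * Re w)"
      by (simp add: algebra_simps)
    then show "\<alpha> ((1-u) *\<^sub>R P + u *\<^sub>R Q) = (1-u) * \<alpha> P + u * \<alpha> Q"
      by (simp add: \<alpha>_def add_divide_distrib)
    have "Re v * Im (((1-u) *\<^sub>R P + u *\<^sub>R Q) - x) - Im v * Re (((1-u) *\<^sub>R P + u *\<^sub>R Q) - x)
      = (1-u) * (Re v * Im (P - x) - Im v * Re (P - x)) + u * (Re v * Im (Q - x) - Im v * Re (Q - x))"
      by (simp add: algebra_simps)
    then show "\<beta> ((1-u) *\<^sub>R P + u *\<^sub>R Q) = (1-u) * \<beta> P + u * \<beta> Q"
      by (simp add: \<beta>_def add_divide_distrib)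
  qed
  define T :: "complex \<Rightarrow> real^2" where "T z = \<alpha> z *\<^sub>R axis 1 1 + \<beta> z *\<^sub>R axis 2 1" for z
  have T12: "T z $ 1 = \<alpha> z" "T z $ 2 = \<beta> z" for z by (simp_all add: T_def axis_def)
  have contT: "continuous_on S T" for S unfolding T_def \<alpha>_def \<beta>_def using D0 by (intro continuous_intros) auto
  have injT: "y = z" if "T y = T z" for y z
  proof -
    have "\<alpha> y = \<alpha> z" "\<beta> y = \<beta> z" using T12 that by metis+
    then show ?thesis using rec[of y] rec[of z] by simp
  qed
  have "compact (T ` cball z0 r)" by (rule compact_continuous_image[OF contT compact_cball])
  then obtain B where B: "\<And>y. y \<in> T ` cball z0 r \<Longrightarrow> norm y \<le> B"
    using compact_imp_bounded bounded_iff by metis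
  define L where "L = max 1 B"
  have L1: "1 \<le> L" by (simp add: L_def)
  have Bc: "\<bar>\<alpha> z\<bar> \<le> L \<and> \<bar>\<beta> z\<bar> \<le> L" if "z \<in> cball z0 r" for z
  proof -
    have "norm (T z) \<le> B" using B that by blast
    then show ?thesis using component_le_norm_cart[of "T z" 1] component_le_norm_cart[of "T z" 2]
      by (simp add: T12 L_def le_max_iff_disj)
  qed
  define Pa where "Pa = x + (-L) *\<^sub>R v"
  define Pb where "Pb = x + L *\<^sub>R v"
  define Pc where "Pc = x + (-L) *\<^sub>R w"
  define Pd where "Pd = x + L *\<^sub>R w"
  define F where "F = linepath Pa a +++ g +++ linepath b Pb"
  define G where "G = linepath Pc c +++ h +++ linepath d Pd"
  have pF: "path F" unfolding F_def by (intro path_join_imp) (simp_all add: g)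
  have pG: "path G" unfolding G_def by (intro path_join_imp) (simp_all add: h)
  have iF: "path_image F = closed_segment Pa a \<union> (path_image g \<union> closed_segment b Pb)"
    unfolding F_def by (simp add: path_image_join g)
  have iG: "path_image G = closed_segment Pc c \<union> (path_image h \<union> closed_segment d Pd)"
    unfolding G_def by (simp add: path_image_join h)
  have ev: "\<alpha> Pa = -L" "\<beta> Pa = 0" "\<alpha> Pb = L" "\<beta> Pb = 0"
    "\<alpha> Pc = 0" "\<beta> Pc = -L" "\<alpha> Pd = 0" "\<beta> Pd = L"
    unfolding Pa_def Pb_def Pc_def Pd_def by (rule av1 aw1)+
  have ep: "\<alpha> a = -s" "\<beta> a = 0" "\<alpha> b = 1-s" "\<beta> b = 0"
    "\<alpha> c = 0" "\<beta> c = -t" "\<alpha> d = 0" "\<beta> d = 1-t"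
    by (subst av cw, rule av1 aw1)+
  have sa: "-L \<le> \<alpha> y \<and> \<alpha> y \<le> -s \<and> \<beta> y = 0" if "y \<in> closed_segment Pa a" for y
    using seg_coords[OF that, of \<alpha>, OF aff(1)] seg_coords[OF that, of \<beta>, OF aff(2)] L1 s01
    unfolding ev ep by auto
  have sb: "1-s \<le> \<alpha> y \<and> \<alpha> y \<le> L \<and> \<beta> y = 0" if "y \<in> closed_segment b Pb" for y
    using seg_coords[OF that, of \<alpha>, OF aff(1)] seg_coords[OF that, of \<beta>, OF aff(2)] L1 s01
    unfolding ev ep by auto
  have sc: "-L \<le> \<beta> y \<and> \<beta> y \<le> -t \<and> \<alpha> y = 0" if "y \<in> closed_segment Pc c" for y
    using seg_coords[OF that, of \<alpha>, OF aff(1)] seg_coords[OF that, of \<beta>, OF aff(2)] L1 t01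
    unfolding ev ep by auto
  have sd: "1-t \<le> \<beta> y \<and> \<beta> y \<le> L \<and> \<alpha> y = 0" if "y \<in> closed_segment d Pd" for y
    using seg_coords[OF that, of \<alpha>, OF aff(1)] seg_coords[OF that, of \<beta>, OF aff(2)] L1 t01
    unfolding ev ep by auto
  define lo :: "real^2" where "lo = (\<chi> i. -L)"
  define hi :: "real^2" where "hi = (\<chi> i. L)"
  have inbox: "T y \<in> cbox lo hi" if "\<bar>\<alpha> y\<bar> \<le> L" "\<bar>\<beta> y\<bar> \<le> L" for y
    using that by (simp add: mem_box_cart forall_2 T12 lo_def hi_def abs_le_iff)
  have boxF: "path_image (T \<circ> F) \<subseteq> cbox lo hi"
  proof
    fix z assume "z \<in> path_image (T \<circ> F)"
    then obtain y where y: "y \<in> path_image F" "z = T y" by (auto simp: path_image_compose)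
    have "\<bar>\<alpha> y\<bar> \<le> L \<and> \<bar>\<beta> y\<bar> \<le> L"
      using y(1) iF sa[of y] sb[of y] Bc[of y] g(2) s01 L1 by auto
    then show "z \<in> cbox lo hi" using inbox y(2) by auto
  qed
  have boxG: "path_image (T \<circ> G) \<subseteq> cbox lo hi"
  proof
    fix z assume "z \<in> path_image (T \<circ> G)"
    then obtain y where y: "y \<in> path_image G" "z = T y" by (auto simp: path_image_compose)
    have "\<bar>\<alpha> y\<bar> \<le> L \<and> \<bar>\<beta> y\<bar> \<le> L"
      using y(1) iG sc[of y] sd[of y] Bc[of y] h(2) t01 L1 by auto
    then show "z \<in> cbox lo hi" using inbox y(2) by auto
  qed
  have ends: "pathstart (T \<circ> F) $ 1 = lo $ 1" "pathfinish (T \<circ> F) $ 1 = hi $ 1"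
    "pathstart (T \<circ> G) $ 2 = lo $ 2" "pathfinish (T \<circ> G) $ 2 = hi $ 2"
    by (simp_all add: F_def G_def pathstart_compose pathfinish_compose T12 lo_def hi_def ev)
  obtain z where z: "z \<in> path_image (T \<circ> F)" "z \<in> path_image (T \<circ> G)"
    using fashoda[OF path_continuous_image[OF pF contT] path_continuous_image[OF pG contT] boxF boxG ends]
    by blast
  then obtain p q where pq: "p \<in> path_image F" "q \<in> path_image G" "z = T p" "z = T q"
    by (auto simp: path_image_compose)
  then have "p = q" using injT by metis
  with pq have pF': "p \<in> path_image F" and pG': "p \<in> path_image G" by auto
  have ag: "a \<in> path_image g" "b \<in> path_image g" using g by (metis pathstart_in_path_image pathfinish_in_path_image)+
  have ch: "c \<in> path_image h" "d \<in> path_image h" using h by (metis pathstart_in_path_image pathfinish_in_path_image)+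
  have recv: "p = x + \<alpha> p *\<^sub>R v" if "\<beta> p = 0" using rec[of p] that by simp
  have recw: "p = x + \<beta> p *\<^sub>R w" if "\<alpha> p = 0" using rec[of p] that by simp
  have case_a: False if "p \<in> closed_segment Pa a"
  proof -
    have c1: "-L \<le> \<alpha> p" "\<alpha> p \<le> -s" "\<beta> p = 0" using sa[OF that] by auto
    have "p \<notin> closed_segment Pc c \<union> closed_segment d Pd" using sc[of p] sd[of p] c1 s01 by auto
    then have ph: "p \<in> path_image h" using pG' iG by auto
    then have pc: "p \<in> cball z0 r" using h(2) by auto
    show False
    proof (cases "\<alpha> p < -s")
      case True
      have "x + (-s) *\<^sub>R v \<in> ball z0 r"
        using mid_ball[OF v0 True, of "1-s" x z0 r] recv[OF c1(3)] pc cb(2) av by auto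
      then show False using av sph(1) by auto
    next
      case False
      then have "p = a" using c1 recv av by auto
      then show False using ph ag disj by auto
    qed
  qed
  have case_b: False if "p \<in> closed_segment b Pb"
  proof -
    have c1: "1-s \<le> \<alpha> p" "\<alpha> p \<le> L" "\<beta> p = 0" using sb[OF that] by auto
    have "p \<notin> closed_segment Pc c \<union> closed_segment d Pd" using sc[of p] sd[of p] c1 s01 by auto
    then have ph: "p \<in> path_image h" using pG' iG by auto
    then have pc: "p \<in> cball z0 r" using h(2) by auto
    show False
    proof (cases "1-s < \<alpha> p")
      case True
      have "-s < 1 - s" by simp
      have "x + (1-s) *\<^sub>R v \<in> ball z0 r"
        using mid_ball[OF v0 \<open>-s < 1 - s\<close> True, of x z0 r] recv[OF c1(3)] pc cb(1) av by auto
      then show False using av sph(2) by auto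
    next
      case False
      then have "p = b" using c1 recv av by auto
      then show False using ph ag disj by auto
    qed
  qed
  have case_c: False if "p \<in> closed_segment Pc c"
  proof -
    have c1: "-L \<le> \<beta> p" "\<beta> p \<le> -t" "\<alpha> p = 0" using sc[OF that] by auto
    have pg: "p \<in> path_image g" using pF' iF sa[of p] sb[of p] c1 s01 by auto
    then have pc: "p \<in> cball z0 r" using g(2) by auto
    show False
    proof (cases "\<beta> p < -t")
      case True
      have "x + (-t) *\<^sub>R w \<in> ball z0 r"
        using mid_ball[OF w0 True, of "1-t" x z0 r] recw[OF c1(3)] pc cb(4) cw by auto
      then show False using cw sph(3) by auto
    next
      case False
      then have "p = c" using c1 recw cw by auto
      then show False using pg ch disj by auto
    qed
  qed
  have case_d: False if "p \<in> closed_segment d Pd"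
  proof -
    have c1: "1-t \<le> \<beta> p" "\<beta> p \<le> L" "\<alpha> p = 0" using sd[OF that] by auto
    have pg: "p \<in> path_image g" using pF' iF sa[of p] sb[of p] c1 s01 by auto
    then have pc: "p \<in> cball z0 r" using g(2) by auto
    show False
    proof (cases "1-t < \<beta> p")
      case True
      have "-t < 1 - t" by simp
      have "x + (1-t) *\<^sub>R w \<in> ball z0 r"
        using mid_ball[OF w0 \<open>-t < 1 - t\<close> True, of x z0 r] recw[OF c1(3)] pc cb(3) cw by auto
      then show False using cw sph(4) by auto
    next
      case False
      then have "p = d" using c1 recw cw by auto
      then show False using pg ch disj by auto
    qed
  qed
  show False using pF' pG' iF iG case_a case_b case_c case_d disj by auto
qed


lemma card2_split:
  assumes "card e = 2" "z \<in> e"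
  shows "\<exists>y. e = {z, y} \<and> y \<noteq> z"
  using assms by (auto simp: card_2_iff)

lemma VC_lem: assumes "hamilton_cycle V E C" "v \<in> V" shows "\<exists>f\<in>C. v \<in> f"
proof -
  obtain vs where vs: "set vs = V" "C = {{vs ! i, vs ! ((i + 1) mod length vs)} | i. i < length vs}"
    using assms(1) unfolding hamilton_cycle_def by auto
  obtain i where i: "i < length vs" "vs ! i = v" using assms(2) vs(1) by (metis in_set_conv_nth)
  have "{vs ! i, vs ! ((i + 1) mod length vs)} \<in> C" unfolding vs(2) using i(1) by blast
  then show ?thesis using i(2) by blast
qed

theorem lemma4p4:
  fixes V :: "'v set" and E C :: "'v set set"
    and c :: complex and r :: real
    and p :: "'v \<Rightarrow> complex" and A :: "'v set \<Rightarrow> complex set"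
  assumes "simple_graph V E"
    and "two_connected V E"
    and "outerplanar V E"
    and "hamilton_cycle V E C"
    and "r > 0"
    and "graph_embedding (cball c r) V E p A"
    and "\<Union>(A ` C) = sphere c r"
  shows "\<exists>p' A'. graph_embedding (cball c r) V E p' A' \<and>
           (\<forall>e \<in> E - C. straight_segment (A' e)) \<and>
           (\<forall>e \<in> E. (e \<in> C \<or> straight_segment (A e)) \<longrightarrow>
               A' e = A e \<and> (\<forall>v \<in> e. p' v = p v))"
proof -
  have sg: "\<And>e. e \<in> E \<Longrightarrow> e \<subseteq> V \<and> card e = 2" using assms(1) by (auto simp: simple_graph_def)
  have inj: "inj_on p V" and pV: "p ` V \<subseteq> cball c r"
    and emb: "\<And>e. e \<in> E \<Longrightarrow> A e \<subseteq> cball c r \<and> (\<exists>u w g. e = {u, w} \<and> arc g \<and> path_image g = A e \<and>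
                 pathstart g = p u \<and> pathfinish g = p w)"
    and dsj: "\<And>e f. e \<in> E \<Longrightarrow> f \<in> E \<Longrightarrow> e \<noteq> f \<Longrightarrow> A e \<inter> A f = p ` (e \<inter> f)"
    and vtx: "\<And>e v. e \<in> E \<Longrightarrow> v \<in> V \<Longrightarrow> p v \<in> A e \<Longrightarrow> v \<in> e"
    using assms(6) unfolding graph_embedding_def
    apply -
        apply (erule conjE, assumption)
       apply (elim conjE, assumption)
      apply (elim conjE, blast)
     apply (elim conjE, blast)
    apply (elim conjE, blast)
    done
  have CE: "C \<subseteq> E" using assms(4) by (simp add: hamilton_cycle_def)
  have PE: "p v \<in> A e" if H: "e \<in> E" "v \<in> e" for e v
  proof -
    obtain u w g where "e = {u, w}" "arc g" "path_image g = A e" "pathstart g = p u" "pathfinish g = p w"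
      using emb[OF H(1)] by blast
    then have "p u \<in> A e" "p w \<in> A e" using pathstart_in_path_image pathfinish_in_path_image by metis+
    then show ?thesis using H(2) \<open>e = {u, w}\<close> by auto
  qed
  have VC: "\<exists>f\<in>C. v \<in> f" if "v \<in> V" for v using VC_lem[OF assms(4) that] .
  have PS: "p v \<in> sphere c r" if H: "v \<in> V" for v
  proof -
    obtain f where "f \<in> C" "v \<in> f" using VC[OF H] by blast
    then have "p v \<in> A f" using PE CE by blast
    then show ?thesis using assms(7) \<open>f \<in> C\<close> by blast
  qed
  have PC: "p v \<in> cball c r" if "v \<in> V" for v using PS[OF that] by auto
  have CS: "A f \<subseteq> sphere c r" if "f \<in> C" for f using assms(7) that by blast
  define A' where "A' e = (if e \<in> C then A e else convex hull (p ` e))" for e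
  have A'seg: "A' e = closed_segment (p u) (p w)" if "e \<in> E" "e \<notin> C" "e = {u, w}" for e u w
    using that by (simp add: A'_def segment_convex_hull)
  have edge: "\<exists>u w. e = {u, w} \<and> u \<noteq> w \<and> u \<in> V \<and> w \<in> V" if "e \<in> E" for e
    using sg[OF that] by (auto simp: card_2_iff)
  have pne: "p u \<noteq> p w" if "u \<in> V" "w \<in> V" "u \<noteq> w" for u w
    using inj that by (auto simp: inj_on_def)
  have mixed: "A' e \<inter> A' f = p ` (e \<inter> f)" if H: "e \<in> E" "e \<notin> C" "f \<in> C" for e f
  proof -
    obtain u w where uw: "e = {u, w}" "u \<noteq> w" "u \<in> V" "w \<in> V" using edge[OF H(1)] by blast
    have fE: "f \<in> E" using CE H(3) by blast
    have Ae: "A' e = closed_segment (p u) (p w)" using A'seg[OF H(1,2) uw(1)] .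
    have Af: "A' f = A f" using H(3) by (simp add: A'_def)
    show ?thesis
    proof
      show "A' e \<inter> A' f \<subseteq> p ` (e \<inter> f)"
      proof
        fix y assume y: "y \<in> A' e \<inter> A' f"
        then have ys: "y \<in> sphere c r" using CS[OF H(3)] Af by auto
        have "y = p u \<or> y = p w"
          using closed_seg_sphere[of y "p u" "p w" c r] y Ae ys PC uw by auto
        then show "y \<in> p ` (e \<inter> f)"
          using vtx[OF fE] y Af uw by auto
      qed
      show "p ` (e \<inter> f) \<subseteq> A' e \<inter> A' f"
        using PE[OF fE] Af Ae uw by auto
    qed
  qed
  have chords: "A' e \<inter> A' f = p ` (e \<inter> f)" if H: "e \<in> E" "e \<notin> C" "f \<in> E" "f \<notin> C" "e \<noteq> f" for e f
  proof (cases "e \<inter> f = {}")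
    case False
    then obtain z where z: "z \<in> e" "z \<in> f" by blast
    obtain e' where e': "e = {z, e'}" "e' \<noteq> z" using card2_split[OF conjunct2[OF sg[OF H(1)]] z(1)] by blast
    obtain f' where f': "f = {z, f'}" "f' \<noteq> z" using card2_split[OF conjunct2[OF sg[OF H(3)]] z(2)] by blast
    have "e' \<noteq> f'"
    proof
      assume "e' = f'" then have "e = f" using e'(1) f'(1) by simp
      then show False using H(5) by simp
    qed
    have V: "z \<in> V" "e' \<in> V" "f' \<in> V" using sg[OF H(1)] sg[OF H(3)] e'(1) f'(1) by auto
    have "closed_segment (p z) (p e') \<inter> closed_segment (p z) (p f') = {p z}"
      by (rule seg_share[OF PS[OF V(1)] PS[OF V(2)] PS[OF V(3)]]) (use pne[OF V(1,2)] pne[OF V(1,3)] pne[OF V(2,3)] e'(2) f'(2) \<open>e' \<noteq> f'\<close> in metis)+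
    then have "A' e \<inter> A' f = {p z}"
      using A'seg[OF H(1,2) e'(1)] A'seg[OF H(3,4) f'(1)] by simp
    moreover have "e \<inter> f = {z}" unfolding e'(1) f'(1) using e'(2) f'(2) \<open>e' \<noteq> f'\<close> by auto
    ultimately show ?thesis by simp
  next
    case True
    obtain u w g where ug: "e = {u, w}" "arc g" "path_image g = A e" "pathstart g = p u" "pathfinish g = p w"
      using emb[OF H(1)] by blast
    obtain u' w' h where uh: "f = {u', w'}" "arc h" "path_image h = A f" "pathstart h = p u'" "pathfinish h = p w'"
      using emb[OF H(3)] by blast
    have V: "u \<in> V" "w \<in> V" "u' \<in> V" "w' \<in> V" using sg[OF H(1)] sg[OF H(3)] ug(1) uh(1) by auto
    have ne: "u \<noteq> w" "u' \<noteq> w'" using sg[OF H(1)] sg[OF H(3)] ug uh by (auto simp: card_2_iff)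
    have ne2: "u \<noteq> u'" "u \<noteq> w'" "w \<noteq> u'" "w \<noteq> w'" using True ug uh by auto
    have "A e \<inter> A f = {}" using dsj[OF H(1,3,5)] True by simp
    have "closed_segment (p u) (p w) \<inter> closed_segment (p u') (p w') = {}"
    proof (rule ccontr)
      assume "closed_segment (p u) (p w) \<inter> closed_segment (p u') (p w') \<noteq> {}"
      then obtain x where x: "x \<in> closed_segment (p u) (p w)" "x \<in> closed_segment (p u') (p w')" by blast
      have Ae: "A e \<subseteq> cball c r" "A f \<subseteq> cball c r" using emb[OF H(1)] emb[OF H(3)] by blast+
      have d6: "p u \<noteq> p w" "p u \<noteq> p u'" "p u \<noteq> p w'" "p w \<noteq> p u'" "p w \<noteq> p w'" "p u' \<noteq> p w'"
        using pne[OF V(1,2) ne(1)] pne[OF V(1,3) ne2(1)] pne[OF V(1,4) ne2(2)]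
          pne[OF V(2,3) ne2(3)] pne[OF V(2,4) ne2(4)] pne[OF V(3,4) ne(2)] by auto
      have "path_image g \<inter> path_image h \<noteq> {}"
        by (rule crossing[OF PS[OF V(1)] PS[OF V(2)] PS[OF V(3)] PS[OF V(4)] d6 x
             arc_imp_path[OF ug(2)] _ ug(4,5) arc_imp_path[OF uh(2)] _ uh(4,5)])
           (use Ae ug(3) uh(3) in auto)
      then show False using \<open>A e \<inter> A f = {}\<close> ug uh by simp
    qed
    then show ?thesis using A'seg[OF H(1,2) ug(1)] A'seg[OF H(3,4) uh(1)] True by simp
  qed
  have h2: "\<forall>e\<in>E. A' e \<subseteq> cball c r \<and> (\<exists>u w g. e = {u, w} \<and> arc g \<and> path_image g = A' e \<and>
                 pathstart g = p u \<and> pathfinish g = p w)"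
  proof
    fix e assume e: "e \<in> E"
    show "A' e \<subseteq> cball c r \<and> (\<exists>u w g. e = {u, w} \<and> arc g \<and> path_image g = A' e \<and>
                 pathstart g = p u \<and> pathfinish g = p w)"
    proof (cases "e \<in> C")
      case True then show ?thesis using emb[OF e] by (simp add: A'_def)
    next
      case False
      obtain u w where uw: "e = {u, w}" "u \<noteq> w" "u \<in> V" "w \<in> V" using edge[OF e] by blast
      have Ae: "A' e = closed_segment (p u) (p w)" using A'seg[OF e False uw(1)] .
      have "A' e \<subseteq> cball c r" unfolding Ae by (rule closed_segment_subset) (use PC uw in auto)
      moreover have "arc (linepath (p u) (p w))" using pne uw by (simp add: arc_linepath)
      ultimately show ?thesis using Ae uw by (metis path_image_linepath pathstart_linepath pathfinish_linepath)
    qed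
  qed
  have h3: "\<forall>e\<in>E. \<forall>f\<in>E. e \<noteq> f \<longrightarrow> A' e \<inter> A' f = p ` (e \<inter> f)"
  proof (intro ballI impI)
    fix e f assume e: "e \<in> E" and f: "f \<in> E" and ef: "e \<noteq> f"
    show "A' e \<inter> A' f = p ` (e \<inter> f)"
    proof (cases "e \<in> C")
      case True
      show ?thesis
      proof (cases "f \<in> C")
        case True then show ?thesis using \<open>e \<in> C\<close> dsj[OF e f ef] by (simp add: A'_def)
      next
        case False then show ?thesis using mixed[OF f False \<open>e \<in> C\<close>] by (simp add: Int_commute)
      qed
    next
      case False
      show ?thesis
      proof (cases "f \<in> C")
        case True then show ?thesis using mixed[OF e \<open>e \<notin> C\<close> True] by simp
      next
        case fC: False then show ?thesis using chords[OF e False f fC ef] by simp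
      qed
    qed
  qed
  have h4: "\<forall>e\<in>E. \<forall>v\<in>V. p v \<in> A' e \<longrightarrow> v \<in> e"
  proof (intro ballI impI)
    fix e v assume e: "e \<in> E" and v: "v \<in> V" and pv: "p v \<in> A' e"
    show "v \<in> e"
    proof (cases "e \<in> C")
      case True then show ?thesis using vtx[OF e v] pv by (simp add: A'_def)
    next
      case False
      obtain u w where uw: "e = {u, w}" "u \<noteq> w" "u \<in> V" "w \<in> V" using edge[OF e] by blast
      have "p v = p u \<or> p v = p w"
        using closed_seg_sphere[of "p v" "p u" "p w" c r] pv A'seg[OF e False uw(1)] PS[OF v] PC uw by auto
      then show ?thesis using inj v uw by (auto simp: inj_on_def)
    qed
  qed
  have G1: "graph_embedding (cball c r) V E p A'"
    unfolding graph_embedding_def using inj pV h2 h3 h4 by (intro conjI)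
  have G2: "\<forall>e \<in> E - C. straight_segment (A' e)"
  proof
    fix e assume "e \<in> E - C"
    then have e: "e \<in> E" "e \<notin> C" by auto
    obtain u w where uw: "e = {u, w}" "u \<noteq> w" "u \<in> V" "w \<in> V" using edge[OF e(1)] by blast
    show "straight_segment (A' e)" unfolding straight_segment_def
      using A'seg[OF e uw(1)] pne[OF uw(3,4,2)] by blast
  qed
  have G3: "\<forall>e \<in> E. (e \<in> C \<or> straight_segment (A e)) \<longrightarrow> A' e = A e \<and> (\<forall>v \<in> e. p v = p v)"
  proof (intro ballI impI)
    fix e assume e: "e \<in> E" and h: "e \<in> C \<or> straight_segment (A e)"
    have "A' e = A e"
    proof (cases "e \<in> C")
      case True then show ?thesis by (simp add: A'_def)
    next
      case False
      then obtain a' b' where ab: "a' \<noteq> b'" "A e = closed_segment a' b'"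
        using h unfolding straight_segment_def by blast
      obtain u w g where ug: "e = {u, w}" "arc g" "path_image g = A e" "pathstart g = p u" "pathfinish g = p w"
        using emb[OF e] by blast
      have V: "u \<in> V" "w \<in> V" using sg[OF e] ug by auto
      have "u \<noteq> w" using sg[OF e] ug by (auto simp: card_2_iff)
      have inA: "p u \<in> A e" "p w \<in> A e" using ug by (metis pathstart_in_path_image pathfinish_in_path_image)+
      have abc: "a' \<in> cball c r" "b' \<in> cball c r" using emb[OF e] ab by auto
      have "p u = a' \<or> p u = b'" using closed_seg_sphere[of "p u" a' b' c r] inA ab abc PS V by auto
      moreover have "p w = a' \<or> p w = b'" using closed_seg_sphere[of "p w" a' b' c r] inA ab abc PS V by auto
      moreover have "p u \<noteq> p w" using pne V \<open>u \<noteq> w\<close> by auto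
      ultimately have "closed_segment (p u) (p w) = closed_segment a' b'"
        by (metis closed_segment_commute)
      then show ?thesis using A'seg[OF e False ug(1)] ab by simp
    qed
    then show "A' e = A e \<and> (\<forall>v \<in> e. p v = p v)" by simp
  qed
  show ?thesis using G1 G2 G3 by blast
qed

end
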